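(* Let $\widetilde\omega:=\exp\bigl(2\int_0^1\ln K(x)\,dx\bigr)$. Then for every integer $n\ge1$ and every $x>0$, $$K(nx)=n^{\frac12nx(nx-1)+\frac1{12}}\;\widetilde\omega^{-\frac12(n^2-1)}\prod_{j=0}^{n-1}K\Bigl(x+\frac jn\Bigr)^n .$$
   Context: $K$ is the Kinkelin function: for $x>0$, $\ln K(x)=\int_0^x\ln\Gamma(t)\,dt+\frac{x(x-1)}{2}-\frac x2\ln 2\pi$; it satisfies $K(1)=1$, $K(x+1)=x^xK(x)$, and $\ln K$ extends continuously to $x=0$ with $K(0)=1$. *)

theory Defs
  imports "HOL-Analysis.Analysis"
begin

text \<open>The integrand is absolutely integrable on [0,x] (log singularity at 0),
  so the Henstock-Kurzweil integral over {0..x} is the (improper) integral.\<close>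
definition lnKinkelin :: "real \<Rightarrow> real" where
  "lnKinkelin x = integral {0..x} (\<lambda>t. ln (Gamma t)) + x * (x - 1) / 2 - x / 2 * ln (2 * pi)"

definition Kinkelin :: "real \<Rightarrow> real" where
  "Kinkelin x = exp (lnKinkelin x)"

definition omega_tilde :: real where
  "omega_tilde = exp (2 * integral {0..1} lnKinkelin)"

end

theory Submission
  imports Defs "HOL-Real_Asymp.Real_Asymp"
begin


lemma poch_mult:
  fixes x :: real
  assumes n: "n \<ge> 1"
  shows "pochhammer (real n * x) (n * M) = real n ^ (n * M) * (\<Prod>j<n. pochhammer (x + real j / real n) M)"
proof (induction M)
  case 0 then show ?case by simp
next
  case (Suc M)
  have "pochhammer (real n * x) (n * Suc M) = pochhammer (real n * x) (n * M + n)" by (simp add: add.commute)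
  also have "\<dots> = pochhammer (real n * x) (n * M) * pochhammer (real n * x + real (n*M)) n"
    by (rule pochhammer_product')
  also have "pochhammer (real n * x + real (n*M)) n = (\<Prod>j<n. real n * (x + real j / real n + real M))"
    unfolding pochhammer_prod atLeast0LessThan
    using n by (intro prod.cong) (auto simp: field_simps)
  also have "\<dots> = real n ^ n * (\<Prod>j<n. (x + real j / real n + real M))"
    by (simp add: prod.distrib)
  finally have "pochhammer (real n * x) (n * Suc M) = real n ^ (n * M) * (\<Prod>j<n. pochhammer (x + real j / real n) M)
      * (real n ^ n * (\<Prod>j<n. (x + real j / real n + real M)))" using Suc by simp
  also have "\<dots> = real n ^ (n * Suc M) * ((\<Prod>j<n. pochhammer (x + real j / real n) M) * (\<Prod>j<n. (x + real j / real n + real M)))"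
    by (simp add: power_add algebra_simps)
  also have "(\<Prod>j<n. pochhammer (x + real j / real n) M) * (\<Prod>j<n. (x + real j / real n + real M)) = (\<Prod>j<n. pochhammer (x + real j / real n) (Suc M))"
    by (simp add: pochhammer_Suc prod.distrib)
  finally show ?case .
qed

lemma gauss_series_ratio:
  fixes x :: real
  assumes n: "n \<ge> 1" and x: "x > 0" and m: "m \<ge> 1"
  shows "(\<Prod>j<n. Gamma_series (x + real j / real n) m) / Gamma_series (real n * x) (n*(m+1) - 1)
           * exp (real n * x * (ln (real (n*(m+1) - 1)) - ln (real m)))
         = fact m ^ n * exp ((\<Sum>j<n. real j / real n) * ln (real m)) * real n ^ (n*(m+1)) / fact (n*(m+1) - 1)"
proof -
  define N where "N = n*(m+1) - 1"
  have N1: "N + 1 = n * (m+1)" using n by (simp add: N_def)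
  define P where "P = (\<Prod>j<n. pochhammer (x + real j / real n) (m+1))"
  have Ppos: "P > 0" unfolding P_def using x by (intro prod_pos pochhammer_pos) (auto intro!: add_pos_nonneg)
  have poch: "pochhammer (real n * x) (N+1) = real n ^ (n*(m+1)) * P"
    unfolding N1 P_def by (rule poch_mult[OF n])
  have prodGS: "(\<Prod>j<n. Gamma_series (x + real j / real n) m) =
     fact m ^ n * (exp (real n * x * ln (real m)) * exp ((\<Sum>j<n. real j / real n) * ln (real m))) / P"
  proof -
    have "(\<Prod>j<n. Gamma_series (x + real j / real n) m) =
       (\<Prod>j<n. fact m * exp ((x + real j / real n) * ln (real m))) / P"
      unfolding Gamma_series_def P_def by (simp add: prod_dividef)
    also have "(\<Prod>j<n. fact m * exp ((x + real j / real n) * ln (real m))) =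
       fact m ^ n * exp (\<Sum>j<n. (x + real j / real n) * ln (real m))"
      by (simp add: prod.distrib exp_sum)
    also have "(\<Sum>j<n. (x + real j / real n) * ln (real m)) = real n * x * ln (real m) + (\<Sum>j<n. real j / real n) * ln (real m)"
      by (simp add: sum.distrib sum_distrib_right sum_distrib_left algebra_simps)
    finally show ?thesis by (simp add: exp_add)
  qed
  have GS: "Gamma_series (real n * x) N = fact N * exp (real n * x * ln (real N)) / (real n ^ (n*(m+1)) * P)"
    unfolding Gamma_series_def using poch by simp
  have e: "exp (real n * x * (ln (real N) - ln (real m))) = exp (real n * x * ln (real N)) / exp (real n * x * ln (real m))"
    by (simp add: right_diff_distrib exp_diff)
  show ?thesis
    unfolding N_def[symmetric] prodGS GS e using Ppos n
    by (simp add: field_simps)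
qed

lemma gauss_series_lim:
  fixes x :: real
  assumes n: "n \<ge> 1" and x: "x > 0"
  shows "(\<lambda>m. (\<Prod>j<n. Gamma_series (x + real j / real n) m) / Gamma_series (real n * x) (n*(m+1) - 1)
           * exp (real n * x * (ln (real (n*(m+1) - 1)) - ln (real m))))
         \<longlonglongrightarrow> (\<Prod>j<n. Gamma (x + real j / real n)) / Gamma (real n * x) * exp (real n * x * ln (real n))"
proof -
  have sm: "strict_mono (\<lambda>m. n*(m+1) - 1)"
  proof (intro strict_monoI)
    fix a b :: nat assume "a < b"
    hence "n * (a+1) < n * (b+1)" using n by simp
    moreover have "n * (a+1) \<ge> 1" using n by simp
    ultimately show "n*(a+1) - 1 < n*(b+1) - 1" by linarith
  qed
  have A: "(\<lambda>m. \<Prod>j<n. Gamma_series (x + real j / real n) m) \<longlonglongrightarrow> (\<Prod>j<n. Gamma (x + real j / real n))"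
    by (intro tendsto_prod Gamma_series_LIMSEQ)
  have B: "(\<lambda>m. Gamma_series (real n * x) (n*(m+1) - 1)) \<longlonglongrightarrow> Gamma (real n * x)"
    using LIMSEQ_subseq_LIMSEQ[OF Gamma_series_LIMSEQ sm] by (simp add: o_def)
  have G0: "Gamma (real n * x) \<noteq> 0" using n x by (intro Gamma_real_pos[THEN less_imp_neq, symmetric]) simp
  have C1: "(\<lambda>m. ln (real n + (real n - 1) / real m)) \<longlonglongrightarrow> ln (real n + 0)"
    using n by (intro tendsto_intros) auto
  have C: "(\<lambda>m. ln (real (n*(m+1) - 1)) - ln (real m)) \<longlonglongrightarrow> ln (real n)"
  proof (rule Lim_transform_eventually[OF C1[simplified]])
    show "\<forall>\<^sub>F m in sequentially. ln (real n + (real n - 1) / real m) = ln (real (n*(m+1) - 1)) - ln (real m)"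
      using eventually_ge_at_top[of "1::nat"]
    proof eventually_elim
      case (elim m)
      define R where "R = real (n*(m+1) - 1)"
      have Req: "R = real n * real m + real n - 1" using n by (simp add: R_def of_nat_diff algebra_simps)
      hence R1: "R / real m = real n + (real n - 1) / real m" using elim by (simp add: field_simps)
      have "real n * real m \<ge> 1" using n elim by (metis mult_le_mono of_nat_1 of_nat_le_iff of_nat_mult mult_1)
      hence R0: "R > 0" using Req n by simp
      have "ln (real n + (real n - 1) / real m) = ln (R / real m)" by (simp only: R1)
      also have "\<dots> = ln R - ln (real m)" using R0 elim by (intro ln_divide_pos) auto
      finally show ?case by (simp only: R_def)
    qed
  qed
  show ?thesis
    by (intro tendsto_intros A B C G0)
qed

lemma gauss_const:
  fixes x y :: real
  assumes n: "n \<ge> 1" and x: "x > 0" and y: "y > 0"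
  shows "(\<Prod>j<n. Gamma (x + real j / real n)) / Gamma (real n * x) * exp (real n * x * ln (real n))
       = (\<Prod>j<n. Gamma (y + real j / real n)) / Gamma (real n * y) * exp (real n * y * ln (real n))"
proof (rule LIMSEQ_unique[OF gauss_series_lim[OF n x]])
  show "(\<lambda>m. (\<Prod>j<n. Gamma_series (x + real j / real n) m) / Gamma_series (real n * x) (n*(m+1) - 1)
           * exp (real n * x * (ln (real (n*(m+1) - 1)) - ln (real m))))
         \<longlonglongrightarrow> (\<Prod>j<n. Gamma (y + real j / real n)) / Gamma (real n * y) * exp (real n * y * ln (real n))"
  proof (rule Lim_transform_eventually[OF gauss_series_lim[OF n y]])
    show "\<forall>\<^sub>F m in sequentially. (\<Prod>j<n. Gamma_series (y + real j / real n) m) / Gamma_series (real n * y) (n*(m+1) - 1)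
           * exp (real n * y * (ln (real (n*(m+1) - 1)) - ln (real m))) = (\<Prod>j<n. Gamma_series (x + real j / real n) m) / Gamma_series (real n * x) (n*(m+1) - 1)
           * exp (real n * x * (ln (real (n*(m+1) - 1)) - ln (real m)))"
      using eventually_ge_at_top[of "1::nat"]
      by eventually_elim (simp only: gauss_series_ratio[OF n x] gauss_series_ratio[OF n y])
  qed
qed



lemma tln_cont: assumes "b \<ge> 0" shows "continuous_on {0..b} (\<lambda>t::real. t * ln t)"
proof (cases "b = 0")
  case True then show ?thesis by simp
next
  case False
  hence b: "b > 0" using assms by simp
  show ?thesis
  proof (rule continuous_on_IccI)
    show "((\<lambda>t::real. t * ln t) \<longlongrightarrow> 0 * ln 0) (at_right 0)" by simp real_asymp
    show "((\<lambda>t::real. t * ln t) \<longlongrightarrow> b * ln b) (at_left b)"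
      using b by (intro tendsto_intros filterlim_at_left_to_right[THEN iffD2] tendsto_at_left_sequentially)
        (auto intro!: tendsto_eq_intros)
  qed (use b in \<open>auto intro!: continuous_intros tendsto_eq_intros\<close>)
qed

lemma ln_has_integral: fixes y :: real assumes "y \<ge> 0" shows "(ln has_integral (y * ln y - y)) {0..y}"
proof -
  have "(ln has_integral ((y * ln y - y) - (0 * ln 0 - 0))) {0..y}"
  proof (rule fundamental_theorem_of_calculus_interior[where f="\<lambda>t. t * ln t - t"])
    show "continuous_on {0..y} (\<lambda>t. t * ln t - t)"
      using assms by (intro continuous_intros tln_cont)
    fix x :: real assume "x \<in> {0<..<y}"
    hence "x > 0" by simp
    thus "((\<lambda>t. t * ln t - t) has_vector_derivative ln x) (at x)"
      unfolding has_real_derivative_iff_has_vector_derivative[symmetric]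
      by (auto intro!: derivative_eq_intros)
  qed (use assms in auto)
  then show ?thesis by simp
qed

definition A1 :: "real \<Rightarrow> real" where "A1 y = integral {0..y} (\<lambda>t. ln (Gamma (t + 1)))"

lemma lg1_isCont: fixes t :: real assumes "t > -1" shows "isCont (\<lambda>t. ln (Gamma (t + 1))) t"
proof -
  have c: "isCont (\<lambda>t. ln_Gamma (t + 1)) t"
    using assms by (intro DERIV_isCont derivative_eq_intros) (auto simp: add.commute)
  have ev: "eventually (\<lambda>s. ln_Gamma (s + 1) = ln (Gamma (s + 1))) (nhds t)"
  proof -
    have "eventually (\<lambda>s. s \<in> {-1<..}) (nhds t)" using assms by (intro eventually_nhds_in_open) auto
    thus ?thesis by (rule eventually_mono) (auto intro!: ln_Gamma_real_pos)
  qed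
  show ?thesis using c isCont_cong[OF ev] by simp
qed

lemma lg1_cont: "continuous_on {0..b} (\<lambda>t::real. ln (Gamma (t + 1)))"
  by (intro continuous_at_imp_continuous_on ballI lg1_isCont) auto

lemma lg1_int: "(\<lambda>t::real. ln (Gamma (t + 1))) integrable_on {0..b}"
  by (intro integrable_continuous_real lg1_cont)

lemma lg_split: fixes t :: real assumes "t > 0" shows "ln (Gamma (t + 1)) = ln t + ln (Gamma t)"
proof -
  have "t \<notin> \<int>\<^sub>\<le>\<^sub>0" using assms by (auto elim!: nonpos_Ints_cases)
  hence "Gamma (t + 1) = t * Gamma t" by (rule Gamma_plus1)
  moreover have "ln (t * Gamma t) = ln t + ln (Gamma t)" by (rule ln_mult_pos) (use assms in auto)
  ultimately show ?thesis by simp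
qed

lemma L_alt: fixes y :: real assumes "y \<ge> 0"
  shows "lnKinkelin y = A1 y - y * ln y + y + y * (y - 1) / 2 - y / 2 * ln (2 * pi)"
proof -
  have h: "((\<lambda>t. ln (Gamma (t + 1)) - ln t) has_integral (A1 y - (y * ln y - y))) {0..y}"
    unfolding A1_def using assms by (intro has_integral_diff ln_has_integral integrable_integral lg1_int)
  have "((\<lambda>t. ln (Gamma t)) has_integral (A1 y - (y * ln y - y))) {0..y}"
  proof (rule has_integral_spike_finite[where S="{0}", OF _ _ h])
    fix t assume "t \<in> {0..y} - {0}"
    hence "t > 0" by auto
    thus "ln (Gamma t) = ln (Gamma (t + 1)) - ln t" using lg_split[of t] by simp
  qed simp
  hence i: "integral {0..y} (\<lambda>t. ln (Gamma t)) = A1 y - (y * ln y - y)" by (rule integral_unique)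
  show ?thesis unfolding lnKinkelin_def i by (simp only: diff_diff_eq2 add_diff_eq diff_add_eq)
qed

lemma A1_deriv: fixes y :: real assumes "y > 0" shows "(A1 has_real_derivative ln (Gamma (y + 1))) (at y)"
proof -
  have "((\<lambda>x. integral {0..x} (\<lambda>t. ln (Gamma (t + 1)))) has_real_derivative ln (Gamma (y + 1))) (at y within {0..y+1})"
    by (rule integral_has_real_derivative[OF lg1_cont]) (use assms in auto)
  moreover have "at y within {0..y+1} = at y"
    by (rule at_within_interior) (use assms in \<open>simp add: interior_atLeastAtMost_real\<close>)
  ultimately show ?thesis unfolding A1_def[abs_def] by simp
qed

lemma A1_cont: "continuous_on {0..b} A1"
proof -
  have "continuous_on {0..b} (\<lambda>x. integral {0..x} (\<lambda>t. ln (Gamma (t + 1))))"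
    by (rule indefinite_integral_continuous_1[OF lg1_int])
  thus ?thesis unfolding A1_def[abs_def] .
qed

lemma lnK_deriv: fixes y :: real assumes "y > 0"
  shows "(lnKinkelin has_real_derivative (ln (Gamma y) + y - 1/2 - ln (2 * pi) / 2)) (at y)"
proof -
  define c where "c = ln (2 * pi)"
  have d1: "((\<lambda>y. y * ln y) has_real_derivative (ln y + 1)) (at y)"
    using assms by (auto intro!: derivative_eq_intros)
  have d2: "((\<lambda>y. y + y * (y - 1) / 2 - y / 2 * c) has_real_derivative (y + 1/2 - c / 2)) (at y)"
    by (auto intro!: derivative_eq_intros simp: field_simps)
  have d: "((\<lambda>y. A1 y - y * ln y + (y + y * (y - 1) / 2 - y / 2 * c)) has_real_derivative
        (ln (Gamma (y + 1)) - (ln y + 1) + (y + 1/2 - c / 2))) (at y)"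
    by (intro DERIV_add DERIV_diff A1_deriv d1 d2 assms)
  have e: "ln (Gamma (y + 1)) - (ln y + 1) + (y + 1/2 - c / 2) = ln (Gamma y) + y - 1/2 - ln (2 * pi) / 2"
    using assms by (simp add: lg_split c_def)
  show ?thesis unfolding e[symmetric]
  proof (rule has_field_derivative_transform_within_open[OF d, of "{0<..}"])
    fix z :: real assume "z \<in> {0<..}"
    thus "A1 z - z * ln z + (z + z * (z - 1) / 2 - z / 2 * c) = lnKinkelin z"
      using L_alt[of z] by (simp add: c_def)
  qed (use assms in auto)
qed

lemma lnK_cont: "b \<ge> 0 \<Longrightarrow> continuous_on {0..b} lnKinkelin"
proof -
  assume b: "b \<ge> 0"
  define c where "c = ln (2 * pi)"
  have cp: "continuous_on {0..b} (\<lambda>y::real. y + y * (y - 1) / 2 - y / 2 * c)"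
    by (intro continuous_intros) auto
  have "continuous_on {0..b} (\<lambda>y. A1 y - y * ln y + (y + y * (y - 1) / 2 - y / 2 * c))"
    by (intro continuous_on_add continuous_on_diff A1_cont tln_cont[OF b] cp)
  moreover have "\<And>z. z \<in> {0..b} \<Longrightarrow> A1 z - z * ln z + (z + z * (z - 1) / 2 - z / 2 * c) = lnKinkelin z"
    using L_alt by (simp add: c_def)
  ultimately show ?thesis by (rule continuous_on_cong[OF refl, THEN iffD1, rotated])
qed



definition Lp :: "real \<Rightarrow> real" where "Lp y = ln (Gamma y) + y - 1/2 - ln (2 * pi) / 2"

definition Gf :: "nat \<Rightarrow> real \<Rightarrow> real" where
  "Gf n x = lnKinkelin (real n * x) - real n * (\<Sum>j<n. lnKinkelin (x + real j / real n))
           - ln (real n) * (real n * x * (real n * x - 1) / 2)"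

definition cg :: "nat \<Rightarrow> real" where
  "cg n = (\<Sum>j<n. ln (Gamma (1 + real j / real n))) + real n * ln (real n) - ln (Gamma (real n))"

lemma sum_real_j: "(\<Sum>j<n. real j) = real n * (real n - 1) / 2"
  by (induction n) (auto simp: field_simps)

lemma gauss_log:
  assumes n: "n \<ge> 1" and x: "x > 0"
  shows "(\<Sum>j<n. ln (Gamma (x + real j / real n))) = cg n - real n * x * ln (real n) + ln (Gamma (real n * x))"
proof -
  have pos: "\<And>z. z > 0 \<Longrightarrow> (\<Prod>j<n. Gamma (z + real j / real n)) / Gamma (real n * z) * exp (real n * z * ln (real n)) > 0"
    using n by (auto intro!: prod_pos mult_pos_pos divide_pos_pos Gamma_real_pos add_pos_nonneg)
  have lnf: "\<And>z. z > 0 \<Longrightarrow> ln ((\<Prod>j<n. Gamma (z + real j / real n)) / Gamma (real n * z) * exp (real n * z * ln (real n)))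
      = (\<Sum>j<n. ln (Gamma (z + real j / real n))) - ln (Gamma (real n * z)) + real n * z * ln (real n)"
  proof -
    fix z :: real assume z: "z > 0"
    have p: "(\<Prod>j<n. Gamma (z + real j / real n)) > 0" using z by (auto intro!: prod_pos Gamma_real_pos add_pos_nonneg)
    have g: "Gamma (real n * z) > 0" using z n by (auto intro!: Gamma_real_pos)
    have "ln ((\<Prod>j<n. Gamma (z + real j / real n)) / Gamma (real n * z) * exp (real n * z * ln (real n)))
       = ln (\<Prod>j<n. Gamma (z + real j / real n)) - ln (Gamma (real n * z)) + real n * z * ln (real n)"
      using p g by (simp add: ln_mult_pos ln_divide_pos)
    also have "ln (\<Prod>j<n. Gamma (z + real j / real n)) = (\<Sum>j<n. ln (Gamma (z + real j / real n)))"
      using z by (intro ln_prod) (auto intro!: Gamma_real_pos[THEN less_imp_neq, symmetric] add_pos_nonneg)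
    finally show "?thesis z" .
  qed
  have "ln ((\<Prod>j<n. Gamma (x + real j / real n)) / Gamma (real n * x) * exp (real n * x * ln (real n)))
      = ln ((\<Prod>j<n. Gamma (1 + real j / real n)) / Gamma (real n * 1) * exp (real n * 1 * ln (real n)))"
    using gauss_const[OF n x, of 1] by simp
  thus ?thesis using lnf[OF x] lnf[of 1] unfolding cg_def by simp
qed

lemma lnK_deriv': "y > 0 \<Longrightarrow> (lnKinkelin has_real_derivative Lp y) (at y)"
  unfolding Lp_def by (rule lnK_deriv)

lemma Gf_deriv:
  assumes n: "n \<ge> 1" and x: "x > 0"
  shows "(Gf n has_real_derivative (real n * (real n - 1) / 2 * ln (2 * pi) + real n / 2 * ln (real n) - real n * cg n)) (at x)"
proof -
  have d1: "((\<lambda>x. lnKinkelin (real n * x)) has_real_derivative (Lp (real n * x) * real n)) (at x)"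
    by (rule DERIV_chain2[OF lnK_deriv']) (use n x in \<open>auto intro!: derivative_eq_intros\<close>)
  have d2: "((\<lambda>x. \<Sum>j<n. lnKinkelin (x + real j / real n)) has_real_derivative (\<Sum>j<n. Lp (x + real j / real n))) (at x)"
  proof (rule DERIV_sum)
    fix j assume "j \<in> {..<n}"
    have pj: "x + real j / real n > 0" using x by (auto intro!: add_pos_nonneg)
    have dd: "((\<lambda>x. x + real j / real n) has_real_derivative 1) (at x)"
      by (auto intro!: derivative_eq_intros)
    from DERIV_chain2[where f=lnKinkelin and g="\<lambda>x. x + real j / real n" and x=x, OF lnK_deriv'[OF pj] dd]
    show "((\<lambda>x. lnKinkelin (x + real j / real n)) has_real_derivative Lp (x + real j / real n)) (at x)"
      by simp
  qed
  define l where "l = ln (real n)"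
  have d3: "((\<lambda>x. l * (real n * x * (real n * x - 1) / 2)) has_real_derivative (l * (real n * real n * x - real n / 2))) (at x)"
    by (auto intro!: derivative_eq_intros simp: field_simps)
  have d: "(Gf n has_real_derivative (Lp (real n * x) * real n - real n * (\<Sum>j<n. Lp (x + real j / real n)) - l * (real n * real n * x - real n / 2))) (at x)"
    unfolding Gf_def[abs_def] l_def[symmetric]
    by (intro DERIV_diff DERIV_cmult d1 d2 d3)
  define c2 where "c2 = ln (2 * pi)"
  have s1: "(\<Sum>j<n. Lp (x + real j / real n)) = (\<Sum>j<n. ln (Gamma (x + real j / real n))) + (\<Sum>j<n. x + real j / real n - 1/2 - c2 / 2)"
    unfolding Lp_def c2_def by (simp add: sum.distrib[symmetric] algebra_simps)
  have s2: "(\<Sum>j<n. x + real j / real n - 1/2 - c2 / 2) = real n * x + (real n - 1) / 2 - real n / 2 - real n * c2 / 2"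
  proof -
    have "(\<Sum>j<n. x + real j / real n - 1/2 - c2 / 2) = (\<Sum>j<n. (x - 1/2 - c2/2) + real j / real n)"
      by (rule sum.cong) auto
    also have "\<dots> = real n * (x - 1/2 - c2/2) + (\<Sum>j<n. real j) / real n"
      by (simp only: sum.distrib sum_divide_distrib sum_constant card_lessThan)
    also have "\<dots> = real n * x + (real n - 1) / 2 - real n / 2 - real n * c2 / 2"
      using n by (simp add: sum_real_j field_simps)
    finally show ?thesis .
  qed
  have e: "Lp (real n * x) * real n - real n * (\<Sum>j<n. Lp (x + real j / real n)) - l * (real n * real n * x - real n / 2)
     = real n * (real n - 1) / 2 * ln (2 * pi) + real n / 2 * ln (real n) - real n * cg n"
    unfolding s1 s2 gauss_log[OF n x] unfolding Lp_def c2_def[symmetric] l_def[symmetric]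
    by (simp add: field_simps)
  show ?thesis using d unfolding e .
qed

lemma D_const: "\<exists>d. \<forall>y>0. lnKinkelin (y + 1) - lnKinkelin y - y * ln y = d"
proof -
  have "\<exists>d. \<forall>y\<in>{0<..}. lnKinkelin (y + 1) - lnKinkelin y - y * ln y = d"
  proof (rule has_field_derivative_zero_constant)
    fix y :: real assume "y \<in> {0<..}"
    hence y: "y > 0" by simp
    have d1: "((\<lambda>y. lnKinkelin (y + 1)) has_real_derivative Lp (y + 1)) (at y)"
    proof -
      have dd: "((\<lambda>x. x + 1) has_real_derivative 1) (at y)" by (auto intro!: derivative_eq_intros)
      have p: "y + 1 > 0" using y by simp
      from DERIV_chain2[where f=lnKinkelin and g="\<lambda>x. x + 1" and x=y, OF lnK_deriv'[OF p] dd]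
      show ?thesis by simp
    qed
    have d2: "((\<lambda>y. y * ln y) has_real_derivative (ln y + 1)) (at y)"
      using y by (auto intro!: derivative_eq_intros)
    have d: "((\<lambda>y. lnKinkelin (y + 1) - lnKinkelin y - y * ln y) has_real_derivative (Lp (y + 1) - Lp y - (ln y + 1))) (at y)"
      by (intro DERIV_diff d1 d2 lnK_deriv' y)
    have "Lp (y + 1) - Lp y - (ln y + 1) = 0"
      unfolding Lp_def using lg_split[OF y] by simp
    with d show "((\<lambda>y. lnKinkelin (y + 1) - lnKinkelin y - y * ln y) has_real_derivative 0) (at y within {0<..})"
      by (simp add: has_field_derivative_at_within)
  qed simp
  thus ?thesis by auto
qed

lemma Gf_shift:
  assumes n: "n \<ge> 1" and x: "x > 0"
    and d: "\<forall>y>0. lnKinkelin (y + 1) - lnKinkelin y - y * ln y = d"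
  shows "Gf n (x + 1 / real n) = Gf n x + d * (1 - real n)"
proof -
  have nx: "real n * x > 0" using n x by simp
  have e1: "lnKinkelin (real n * (x + 1 / real n)) = lnKinkelin (real n * x) + real n * x * ln (real n * x) + d"
  proof -
    have "real n * (x + 1 / real n) = real n * x + 1" using n by (simp add: field_simps)
    thus ?thesis using d nx by force
  qed
  define f where "f j = lnKinkelin (x + real j / real n)" for j
  have e2: "(\<Sum>j<n. lnKinkelin (x + 1 / real n + real j / real n)) = (\<Sum>j<n. f j) + x * ln x + d"
  proof -
    have "(\<Sum>j<n. lnKinkelin (x + 1 / real n + real j / real n)) = (\<Sum>j<n. f (Suc j))"
      unfolding f_def by (rule sum.cong) (auto simp: add_divide_distrib algebra_simps)
    also have "\<dots> = (\<Sum>j<n. f j) + (f n - f 0)"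
      using sum_lessThan_telescope[of f n] by (simp add: sum_subtractf)
    also have "f n - f 0 = x * ln x + d" unfolding f_def using n d x by force
    finally show ?thesis by simp
  qed
  have e3: "ln (real n * x) = ln (real n) + ln x" using n x by (simp add: ln_mult_pos)
  show ?thesis unfolding Gf_def e1 e2 f_def[symmetric] e3
    using n by (simp add: field_simps)
qed

lemma Gf_affine:
  assumes n: "n \<ge> 1"
  shows "\<exists>a. \<forall>x>0. Gf n x = a + (real n * (real n - 1) / 2 * ln (2 * pi) + real n / 2 * ln (real n) - real n * cg n) * x"
proof -
  define b where "b = real n * (real n - 1) / 2 * ln (2 * pi) + real n / 2 * ln (real n) - real n * cg n"
  have "\<exists>a. \<forall>x\<in>{0<..}. Gf n x - b * x = a"
  proof (rule has_field_derivative_zero_constant)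
    fix x :: real assume "x \<in> {0<..}"
    hence x: "x > 0" by simp
    have "((\<lambda>x. Gf n x - b * x) has_real_derivative (b - b * 1)) (at x)"
      unfolding b_def by (intro DERIV_diff Gf_deriv n x DERIV_cmult DERIV_ident)
    thus "((\<lambda>x. Gf n x - b * x) has_real_derivative 0) (at x within {0<..})"
      by (simp add: has_field_derivative_at_within)
  qed simp
  then obtain a where "\<forall>x\<in>{0<..}. Gf n x - b * x = a" by blast
  hence "\<forall>x>0. Gf n x = a + b * x" by (auto simp: algebra_simps)
  thus ?thesis unfolding b_def by blast
qed



lemma cg2: "cg 2 = ln (sqrt pi) + ln 2"
proof -
  have g32: "Gamma (3/2 :: real) = sqrt pi / 2"
  proof -
    have "(1/2::real) \<notin> \<int>\<^sub>\<le>\<^sub>0" by (auto elim!: nonpos_Ints_cases)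
    hence "Gamma (1/2 + 1 :: real) = 1/2 * Gamma (1/2)" by (rule Gamma_plus1)
    thus ?thesis by (simp add: Gamma_one_half_real)
  qed
  have g2: "Gamma (2::real) = 1" using Gamma_fact[of 1, where 'a=real] by simp
  have "cg 2 = ln (Gamma (3/2)) + 2 * ln 2"
    unfolding cg_def by (simp add: numeral_2_eq_2 g2)
  also have "ln (Gamma (3/2 :: real)) = ln (sqrt pi) - ln 2"
    unfolding g32 by (simp add: ln_divide_pos)
  finally show ?thesis by simp
qed

lemma b2_zero: "real 2 * (real 2 - 1) / 2 * ln (2 * pi) + real 2 / 2 * ln (real 2) - real 2 * cg 2 = 0"
proof -
  have "ln (2 * pi) = ln 2 + ln pi" by (simp add: ln_mult_pos)
  moreover have "ln (sqrt pi) = ln pi / 2" by (simp add: ln_sqrt)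
  ultimately show ?thesis unfolding cg2 by simp
qed

lemma d_zero:
  assumes d: "\<forall>y>0. lnKinkelin (y + 1) - lnKinkelin y - y * ln y = d"
  shows "d = 0"
proof -
  obtain a where a: "\<forall>x>0. Gf 2 x = a + (real 2 * (real 2 - 1) / 2 * ln (2 * pi) + real 2 / 2 * ln (real 2) - real 2 * cg 2) * x"
    using Gf_affine[of 2] by auto
  hence a': "\<forall>x>0. Gf 2 x = a" unfolding b2_zero by simp
  have "Gf 2 (1 + 1 / real 2) = Gf 2 1 + d * (1 - real 2)"
    by (rule Gf_shift[OF _ _ d]) auto
  moreover have "Gf 2 (1 + 1 / real 2) = a" "Gf 2 1 = a" using a' by auto
  ultimately show ?thesis by simp
qed

lemma Gf_const:
  assumes n: "n \<ge> 1"
  shows "\<exists>a. \<forall>x>0. Gf n x = a"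
proof -
  obtain d where d: "\<forall>y>0. lnKinkelin (y + 1) - lnKinkelin y - y * ln y = d" using D_const by blast
  have d0: "d = 0" by (rule d_zero[OF d])
  define b where "b = real n * (real n - 1) / 2 * ln (2 * pi) + real n / 2 * ln (real n) - real n * cg n"
  obtain a where a: "\<forall>x>0. Gf n x = a + b * x" using Gf_affine[OF n] unfolding b_def by blast
  have "Gf n (1 + 1 / real n) = Gf n 1 + d * (1 - real n)"
    by (rule Gf_shift[OF n _ d]) auto
  moreover have "(1::real) + 1 / real n > 0" by (intro add_pos_nonneg) auto
  hence "Gf n (1 + 1 / real n) = a + b * (1 + 1 / real n)" using a by blast
  moreover have "Gf n 1 = a + b * 1" using a by simp
  ultimately have "b / real n = 0" using d0 by (simp add: algebra_simps)
  hence "b = 0" using n by simp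
  thus ?thesis using a by auto
qed

definition Mf :: "real \<Rightarrow> real" where "Mf y = integral {0..y} lnKinkelin"

lemma Mf_deriv: fixes y :: real assumes "y > 0" shows "(Mf has_real_derivative lnKinkelin y) (at y)"
proof -
  have "((\<lambda>x. integral {0..x} lnKinkelin) has_real_derivative lnKinkelin y) (at y within {0..y+1})"
    by (rule integral_has_real_derivative[OF lnK_cont]) (use assms in auto)
  moreover have "at y within {0..y+1} = at y"
    by (rule at_within_interior) (use assms in \<open>simp add: interior_atLeastAtMost_real\<close>)
  ultimately show ?thesis unfolding Mf_def[abs_def] by simp
qed

lemma Mf_cont: "b \<ge> 0 \<Longrightarrow> continuous_on {0..b} Mf"
proof -
  assume b: "b \<ge> 0"
  have "continuous_on {0..b} (\<lambda>x. integral {0..x} lnKinkelin)"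
    by (rule indefinite_integral_continuous_1[OF integrable_continuous_real[OF lnK_cont[OF b]]])
  thus ?thesis unfolding Mf_def[abs_def] .
qed

lemma Mf0: "Mf 0 = 0" unfolding Mf_def by simp

lemma const_value:
  assumes n: "n \<ge> 1" and a: "\<forall>x>0. Gf n x = a"
  shows "a = Mf 1 - real n ^ 2 * Mf 1 + ln (real n) / 12"
proof -
  define l where "l = ln (real n)"
  define \<Phi> where "\<Phi> x = Mf (real n * x) / real n - real n * (\<Sum>j<n. Mf (x + real j / real n))
      - l * (real n ^ 2 * x ^ 3 / 6 - real n * x ^ 2 / 4)" for x
  have np: "real n > 0" using n by simp
  have "(Gf n has_integral (\<Phi> (1 / real n) - \<Phi> 0)) {0..1 / real n}"
  proof (rule fundamental_theorem_of_calculus_interior)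
    show "0 \<le> 1 / real n" by simp
    have c1: "continuous_on {0..1 / real n} (\<lambda>x. Mf (real n * x))"
      by (rule continuous_on_compose2[OF Mf_cont[of 1]]) (use np in \<open>auto intro!: continuous_intros simp: field_simps\<close>)
    have c2: "continuous_on {0..1 / real n} (\<lambda>x. Mf (x + real j / real n))" if "j < n" for j
    proof (rule continuous_on_compose2[OF Mf_cont[of 2]])
      show "continuous_on {0..1 / real n} (\<lambda>x. x + real j / real n)" by (intro continuous_intros)
      show "(\<lambda>x. x + real j / real n) ` {0..1 / real n} \<subseteq> {0..2}"
      proof
        fix z assume "z \<in> (\<lambda>x. x + real j / real n) ` {0..1 / real n}"
        then obtain x where x: "x \<in> {0..1 / real n}" "z = x + real j / real n" by (rule imageE)
        have "1 / real n \<le> 1" using n by simp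
        moreover have "real j / real n \<le> 1" using that np by simp
        ultimately show "z \<in> {0..2}" using x by auto
      qed
    qed simp
    show "continuous_on {0..1 / real n} \<Phi>"
      unfolding \<Phi>_def[abs_def]
      by (intro continuous_intros c1 c2) (use np in auto)
  next
    fix x assume "x \<in> {0<..<1 / real n}"
    hence x: "x > 0" by simp
    have d1: "((\<lambda>x. Mf (real n * x)) has_real_derivative (lnKinkelin (real n * x) * real n)) (at x)"
    proof -
      have dd: "((\<lambda>x. real n * x) has_real_derivative real n) (at x)" by (auto intro!: derivative_eq_intros)
      have p: "real n * x > 0" using np x by simp
      from DERIV_chain2[where f=Mf and g="\<lambda>x. real n * x" and x=x, OF Mf_deriv[OF p] dd] show ?thesis .
    qed
    have d2: "((\<lambda>x. \<Sum>j<n. Mf (x + real j / real n)) has_real_derivative (\<Sum>j<n. lnKinkelin (x + real j / real n))) (at x)"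
    proof (rule DERIV_sum)
      fix j assume "j \<in> {..<n}"
      have pj: "x + real j / real n > 0" using x by (auto intro!: add_pos_nonneg)
      have dd: "((\<lambda>x. x + real j / real n) has_real_derivative 1) (at x)"
        by (auto intro!: derivative_eq_intros)
      from DERIV_chain2[where f=Mf and g="\<lambda>x. x + real j / real n" and x=x, OF Mf_deriv[OF pj] dd]
      show "((\<lambda>x. Mf (x + real j / real n)) has_real_derivative lnKinkelin (x + real j / real n)) (at x)"
        by simp
    qed
    have d3: "((\<lambda>x. l * (real n ^ 2 * x ^ 3 / 6 - real n * x ^ 2 / 4)) has_real_derivative (l * (real n * x * (real n * x - 1) / 2))) (at x)"
      by (auto intro!: derivative_eq_intros simp: field_simps power2_eq_square power3_eq_cube)
    have d: "(\<Phi> has_real_derivative (lnKinkelin (real n * x) * real n / real n - real n * (\<Sum>j<n. lnKinkelin (x + real j / real n))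
               - l * (real n * x * (real n * x - 1) / 2))) (at x)"
      unfolding \<Phi>_def[abs_def] by (intro DERIV_diff DERIV_cmult DERIV_cdivide d1 d2 d3)
    thus "(\<Phi> has_vector_derivative Gf n x) (at x)"
      unfolding has_real_derivative_iff_has_vector_derivative[symmetric] Gf_def l_def using np by simp
  qed
  moreover have "(Gf n has_integral (a * (1 / real n))) {0..1 / real n}"
  proof (rule has_integral_spike_finite[where S="{0}"])
    show "((\<lambda>x. a) has_integral (a * (1 / real n))) {0..1 / real n}"
      using has_integral_const_real[of a 0 "1 / real n"] by (simp add: mult.commute)
  qed (use a in auto)
  ultimately have eq: "\<Phi> (1 / real n) - \<Phi> 0 = a * (1 / real n)" by (rule has_integral_unique)
  have tel: "(\<Sum>j<n. Mf (1 / real n + real j / real n)) - (\<Sum>j<n. Mf (0 + real j / real n)) = Mf 1"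
  proof -
    define f where "f j = Mf (real j / real n)" for j
    have "(\<Sum>j<n. Mf (1 / real n + real j / real n)) = (\<Sum>j<n. f (Suc j))"
      unfolding f_def by (rule sum.cong) (auto simp: add_divide_distrib)
    moreover have "(\<Sum>j<n. Mf (0 + real j / real n)) = (\<Sum>j<n. f j)" unfolding f_def by simp
    moreover have "(\<Sum>j<n. f (Suc j)) - (\<Sum>j<n. f j) = f n - f 0"
      using sum_lessThan_telescope[of f n] by (simp add: sum_subtractf)
    moreover have "f n = Mf 1" "f 0 = 0" unfolding f_def using np by (auto simp: Mf0)
    ultimately show ?thesis by simp
  qed
  have "\<Phi> (1 / real n) - \<Phi> 0 = Mf 1 / real n - real n * Mf 1 + l / (12 * real n)"
  proof -
    have "\<Phi> (1 / real n) - \<Phi> 0 = Mf 1 / real n - real n * ((\<Sum>j<n. Mf (1 / real n + real j / real n)) - (\<Sum>j<n. Mf (0 + real j / real n)))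
        - l * (real n ^ 2 * (1 / real n) ^ 3 / 6 - real n * (1 / real n) ^ 2 / 4)"
      unfolding \<Phi>_def using np by (simp add: Mf0 algebra_simps)
    also have "real n ^ 2 * (1 / real n) ^ 3 / 6 - real n * (1 / real n) ^ 2 / 4 = - 1 / (12 * real n)"
      using np by (simp add: field_simps power2_eq_square power3_eq_cube)
    finally show ?thesis unfolding tel by simp
  qed
  with eq have e2: "a * (1 / real n) = Mf 1 / real n - real n * Mf 1 + l / (12 * real n)" by simp
  have "a = real n * (a * (1 / real n))" using np by simp
  also have "\<dots> = real n * (Mf 1 / real n - real n * Mf 1 + l / (12 * real n))" by (simp only: e2)
  also have "\<dots> = Mf 1 - real n ^ 2 * Mf 1 + l / 12" using np by (simp add: field_simps power2_eq_square)
  finally show ?thesis unfolding l_def .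
qed

theorem mainTheorem16:
  fixes n :: nat and x :: real
  assumes "n \<ge> 1" and "x > 0"
  shows "Kinkelin (real n * x) =
    real n powr (real n * x * (real n * x - 1) / 2 + 1 / 12)
    * omega_tilde powr (- (real n ^ 2 - 1) / 2)
    * (\<Prod>j<n. Kinkelin (x + real j / real n) ^ n)"
proof -
  have n: "n \<ge> 1" and x: "x > 0" using assms by auto
  obtain a where a: "\<forall>x>0. Gf n x = a" using Gf_const[OF n] by blast
  have av: "a = Mf 1 - real n ^ 2 * Mf 1 + ln (real n) / 12" by (rule const_value[OF n a])
  have "Gf n x = a" using a x by simp
  hence L: "lnKinkelin (real n * x) = a + real n * (\<Sum>j<n. lnKinkelin (x + real j / real n))
        + ln (real n) * (real n * x * (real n * x - 1) / 2)"
    unfolding Gf_def by simp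
  have np: "real n > 0" using n by simp
  have p1: "real n powr (real n * x * (real n * x - 1) / 2 + 1 / 12) = exp ((real n * x * (real n * x - 1) / 2 + 1 / 12) * ln (real n))"
    using np by (simp add: powr_def)
  have om: "omega_tilde = exp (2 * Mf 1)" unfolding omega_tilde_def Mf_def ..
  have p2: "omega_tilde powr (- (real n ^ 2 - 1) / 2) = exp (- (real n ^ 2 - 1) / 2 * (2 * Mf 1))"
    unfolding om by (simp add: powr_def)
  have p3: "(\<Prod>j<n. Kinkelin (x + real j / real n) ^ n) = exp (real n * (\<Sum>j<n. lnKinkelin (x + real j / real n)))"
  proof -
    have "(\<Prod>j<n. Kinkelin (x + real j / real n) ^ n) = (\<Prod>j<n. exp (real n * lnKinkelin (x + real j / real n)))"
      unfolding Kinkelin_def by (intro prod.cong refl) (simp add: exp_of_nat_mult)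
    also have "\<dots> = exp (\<Sum>j<n. real n * lnKinkelin (x + real j / real n))" by (simp add: exp_sum)
    also have "\<dots> = exp (real n * (\<Sum>j<n. lnKinkelin (x + real j / real n)))" by (simp add: sum_distrib_left)
    finally show ?thesis .
  qed
  have "Kinkelin (real n * x) = exp ((real n * x * (real n * x - 1) / 2 + 1 / 12) * ln (real n)
      + (- (real n ^ 2 - 1) / 2 * (2 * Mf 1)) + real n * (\<Sum>j<n. lnKinkelin (x + real j / real n)))"
    unfolding Kinkelin_def L av by (simp add: field_simps)
  also have "\<dots> = real n powr (real n * x * (real n * x - 1) / 2 + 1 / 12)
    * omega_tilde powr (- (real n ^ 2 - 1) / 2)
    * (\<Prod>j<n. Kinkelin (x + real j / real n) ^ n)"
    unfolding p1 p2 p3 by (simp add: exp_add)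
  finally show ?thesis .
qed

end
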